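(* Let $X$ be a separable absolutely strongly star-Hurewicz space. If $Y$ is a closed and discrete subset of $X$, then $|Y|<\mathfrak{b}$.
   Context: All spaces are regular. $St(A,\mathcal{U})=\bigcup\{U\in\mathcal{U}:U\cap A\neq\emptyset\}$. $\mathfrak{b}$ is the bounding number. $X$ is absolutely strongly star-Hurewicz if for each sequence $(\mathcal{U}_n:n\in\omega)$ of open covers and each dense subset $D$ of $X$ there are finite sets $F_n\subseteq D$ ($n\in\omega$) such that every $x\in X$ lies in $St(F_n,\mathcal{U}_n)$ for all but finitely many $n$. *)

theory Defs
  imports "HOL-Analysis.Analysis"
begin

definition star_of :: "'a set \<Rightarrow> 'a set set \<Rightarrow> 'a set" where
  "star_of A \<U> = \<Union>{U \<in> \<U>. U \<inter> A \<noteq> {}}"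

definition open_cover :: "'a topology \<Rightarrow> 'a set set \<Rightarrow> bool" where
  "open_cover X \<U> \<longleftrightarrow> (\<forall>U\<in>\<U>. openin X U) \<and> \<Union>\<U> = topspace X"

definition dense_in :: "'a topology \<Rightarrow> 'a set \<Rightarrow> bool" where
  "dense_in X D \<longleftrightarrow> D \<subseteq> topspace X \<and> X closure_of D = topspace X"

definition absolutely_strongly_star_Hurewicz :: "'a topology \<Rightarrow> bool" where
  "absolutely_strongly_star_Hurewicz X \<longleftrightarrow>
     (\<forall>\<U> :: nat \<Rightarrow> 'a set set. \<forall>D.
        (\<forall>n. open_cover X (\<U> n)) \<and> dense_in X D \<longrightarrow>
        (\<exists>F :: nat \<Rightarrow> 'a set. (\<forall>n. finite (F n) \<and> F n \<subseteq> D) \<and>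
           (\<forall>x\<in>topspace X. \<forall>\<^sub>F n in sequentially. x \<in> star_of (F n) (\<U> n))))"

definition le_star :: "(nat \<Rightarrow> nat) \<Rightarrow> (nat \<Rightarrow> nat) \<Rightarrow> bool" where
  "le_star f g \<longleftrightarrow> (\<forall>\<^sub>F n in sequentially. f n \<le> g n)"

definition unbounded_family :: "(nat \<Rightarrow> nat) set \<Rightarrow> bool" where
  "unbounded_family F \<longleftrightarrow> \<not> (\<exists>g. \<forall>f\<in>F. le_star f g)"

text \<open>\<open>|Y| < \<mathfrak>b\<close>: \<open>\<mathfrak>b\<close> is the least cardinality of an unbounded family,
  so \<open>|Y| < \<mathfrak>b\<close> means \<open>|Y|\<close> is strictly below the cardinality of every
  unbounded family.\<close>
definition card_less_bounding :: "'a set \<Rightarrow> bool" where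
  "card_less_bounding Y \<longleftrightarrow> (\<forall>F. unbounded_family F \<longrightarrow> (card_of Y, card_of F) \<in> ordLess)"

end

theory Submission
  imports Defs
begin

lemma countable_bounded:
  fixes F :: "(nat \<Rightarrow> nat) set"
  assumes "countable F"
  shows "\<exists>g. \<forall>f\<in>F. le_star f g"
proof (cases "F = {}")
  case True then show ?thesis by auto
next
  case False
  define e where "e = from_nat_into F"
  have re: "range e = F" using False assms by (simp add: e_def range_from_nat_into)
  define g where "g n = (\<Sum>k\<le>n. e k n)" for n
  have "le_star f g" if fF: "f \<in> F" for f
  proof -
    obtain k where k: "f = e k" using re fF by blast
    have "\<forall>n\<ge>k. f n \<le> g n"
    proof (intro allI impI)
      fix n assume "k \<le> n"
      then show "f n \<le> g n" unfolding g_def k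
        by (intro member_le_sum) auto
    qed
    then show ?thesis unfolding le_star_def eventually_sequentially by blast
  qed
  then show ?thesis by blast
qed

lemma finite_sub_range:
  fixes d :: "nat \<Rightarrow> 'a"
  assumes "finite A" "A \<subseteq> range d"
  shows "\<exists>m. A \<subseteq> d ` {..m}"
  using assms
proof (induction A rule: finite_induct)
  case empty then show ?case by auto
next
  case (insert x A)
  then obtain m where m: "A \<subseteq> d ` {..m}" by auto
  obtain j where j: "x = d j" using insert.prems by auto
  have "insert x A \<subseteq> d ` {..max m j}" using m j by auto
  then show ?case by blast
qed

theorem mainTheorem11:
  fixes X :: "'a topology" and Y :: "'a set"
  assumes "regular_space X"
    and "separable_space X"
    and "absolutely_strongly_star_Hurewicz X"
    and "closedin X Y"
    and "subtopology X Y = discrete_topology Y"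
  shows "card_less_bounding Y"
proof -
  obtain D where D: "countable D" "D \<subseteq> topspace X" "X closure_of D = topspace X"
    using assms(2) unfolding separable_space_def by blast
  have Ysub: "Y \<subseteq> topspace X" using assms(4) closedin_subset by blast
  have "\<forall>y\<in>Y. \<exists>T. openin X T \<and> T \<inter> Y = {y}"
  proof
    fix y assume "y \<in> Y"
    then have "openin (subtopology X Y) {y}" using assms(5) by simp
    then show "\<exists>T. openin X T \<and> T \<inter> Y = {y}" unfolding openin_subtopology by auto
  qed
  then obtain U where U: "\<And>y. y \<in> Y \<Longrightarrow> openin X (U y) \<and> U y \<inter> Y = {y}" by (metis (no_types))
  have "\<forall>y\<in>Y - D. \<forall>dd\<in>D. \<exists>W. openin X W \<and> y \<in> W \<and> dd \<notin> W"
  proof (intro ballI)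
    fix y dd assume y: "y \<in> Y - D" and dd: "dd \<in> D"
    show "\<exists>W. openin X W \<and> y \<in> W \<and> dd \<notin> W"
    proof (cases "dd \<in> Y")
      case True
      have ne: "dd \<noteq> y" using y dd by auto
      have Uy: "openin X (U y)" "U y \<inter> Y = {y}" using U[of y] y by auto
      have "y \<in> U y" using Uy(2) by auto
      moreover have "dd \<notin> U y" using Uy(2) True ne by auto
      ultimately show ?thesis using Uy(1) by blast
    next
      case False
      have C: "X closure_of {y} \<subseteq> Y"
        using assms(4) y by (intro closure_of_minimal) auto
      have yC: "y \<in> X closure_of {y}" using y Ysub by (intro closure_of_subset[THEN subsetD]) auto
      have cl: "closedin X (X closure_of {y})" by simp
      have ddn: "dd \<in> topspace X - X closure_of {y}" using C False dd D(2) by auto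
      have "\<exists>U' V'. openin X U' \<and> openin X V' \<and> dd \<in> U' \<and> X closure_of {y} \<subseteq> V' \<and> disjnt U' V'"
        using assms(1)[unfolded regular_space_def, rule_format, of "X closure_of {y}" dd] cl ddn by blast
      then obtain U' V' where UV: "openin X U'" "openin X V'" "dd \<in> U'"
        "X closure_of {y} \<subseteq> V'" "disjnt U' V'" by blast
      have "y \<in> V'" using UV(4) yC by blast
      moreover have "dd \<notin> V'" using UV(3,5) by (auto simp: disjnt_def)
      ultimately show ?thesis using UV(2) by blast
    qed
  qed
  then obtain W where W: "\<And>y dd. y \<in> Y - D \<Longrightarrow> dd \<in> D \<Longrightarrow> openin X (W y dd) \<and> y \<in> W y dd \<and> dd \<notin> W y dd"
    by metis
  show ?thesis unfolding card_less_bounding_def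
  proof (intro allI impI)
    fix F :: "(nat \<Rightarrow> nat) set"
    assume unb: "unbounded_family F"
    show "(card_of Y, card_of F) \<in> ordLess"
    proof (rule ccontr)
      assume "(card_of Y, card_of F) \<notin> ordLess"
      moreover have "(card_of Y, card_of F) \<in> ordLess \<or> (card_of F, card_of Y) \<in> ordLeq"
        by (rule ordLess_or_ordLeq[OF card_of_Well_order card_of_Well_order])
      ultimately have le: "(card_of F, card_of Y) \<in> ordLeq" by blast
      have "\<exists>h. inj_on h F \<and> h ` F \<subseteq> Y" using card_of_ordLeq[of F Y] le by simp
      then obtain h where h: "inj_on h F" "h ` F \<subseteq> Y" by blast
      define F1 where "F1 = {f\<in>F. h f \<in> D}"
      define F2 where "F2 = {f\<in>F. h f \<notin> D}"
      have "countable F1"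
      proof (rule countable_image_inj_on)
        show "countable (h ` F1)" using D(1) by (rule countable_subset[rotated]) (auto simp: F1_def)
        show "inj_on h F1" using h(1) by (rule inj_on_subset) (auto simp: F1_def)
      qed
      then obtain g1 where g1: "\<forall>f\<in>F1. le_star f g1" using countable_bounded by blast
      have "\<exists>g. \<forall>f\<in>F2. le_star f g"
      proof (cases "F2 = {}")
        case True then show ?thesis by auto
      next
        case False
        then obtain f0 where "f0 \<in> F2" by auto
        then have "h f0 \<in> topspace X" using h Ysub by (auto simp: F2_def)
        then have Dne: "D \<noteq> {}" using D(3) by auto
        define d where "d = from_nat_into D"
        have rd: "range d = D" using Dne D(1) by (simp add: d_def range_from_nat_into)
        have hF2: "\<And>f. f \<in> F2 \<Longrightarrow> h f \<in> Y - D \<and> f \<in> F" using h by (auto simp: F2_def)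
        define V where "V f n = U (h f) \<inter> (\<Inter>i\<in>{..f n}. W (h f) (d i))" for f n
        define Cov where "Cov n = insert (topspace X - Y) (U ` (Y - h ` F2) \<union> (\<lambda>f. V f n) ` F2)" for n
        have Vopen: "openin X (V f n)" if "f \<in> F2" for f n
          unfolding V_def using hF2[OF that] U W rd
          by (intro openin_Int openin_INT2) auto
        have hV: "h f \<in> V f n" if "f \<in> F2" for f n
          unfolding V_def using hF2[OF that] U W rd by auto
        have cov: "open_cover X (Cov n)" for n
        proof -
          have o: "\<forall>C\<in>Cov n. openin X C"
            unfolding Cov_def using Vopen U assms(4) by (auto simp: closedin_def)
          then have "\<Union>(Cov n) \<subseteq> topspace X" using openin_subset by blast
          moreover have "topspace X \<subseteq> \<Union>(Cov n)"
          proof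
            fix x assume x: "x \<in> topspace X"
            show "x \<in> \<Union>(Cov n)"
            proof (cases "x \<in> Y")
              case False then show ?thesis using x unfolding Cov_def by auto
            next
              case True
              show ?thesis
              proof (cases "x \<in> h ` F2")
                case True
                then obtain f where "f \<in> F2" "x = h f" by auto
                then show ?thesis using hV unfolding Cov_def by blast
              next
                case False
                then have "x \<in> U x" "U x \<in> Cov n" using U[of x] \<open>x \<in> Y\<close> unfolding Cov_def by auto
                then show ?thesis by blast
              qed
            qed
          qed
          ultimately show ?thesis using o unfolding open_cover_def by blast
        qed
        have dense: "dense_in X D" using D unfolding dense_in_def by blast
        have "\<exists>Fs :: nat \<Rightarrow> 'a set. (\<forall>n. finite (Fs n) \<and> Fs n \<subseteq> D) \<and>
           (\<forall>x\<in>topspace X. \<forall>\<^sub>F n in sequentially. x \<in> star_of (Fs n) (Cov n))"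
          using assms(3)[unfolded absolutely_strongly_star_Hurewicz_def, rule_format, of Cov D] cov dense
          by blast
        then obtain Fs :: "nat \<Rightarrow> 'a set" where Fs: "\<And>n. finite (Fs n) \<and> Fs n \<subseteq> D"
          "\<And>x. x\<in>topspace X \<Longrightarrow> \<forall>\<^sub>F n in sequentially. x \<in> star_of (Fs n) (Cov n)"
          by blast
        define g where "g n = (SOME m. Fs n \<subseteq> d ` {..m})" for n
        have gF: "Fs n \<subseteq> d ` {..g n}" for n
        proof -
          have r: "Fs n \<subseteq> range d" using Fs(1)[of n] rd by simp
          have "\<exists>m. Fs n \<subseteq> d ` {..m}" by (rule finite_sub_range[OF conjunct1[OF Fs(1)] r])
          then show ?thesis unfolding g_def by (rule someI_ex)
        qed
        have "le_star f g" if f: "f \<in> F2" for f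
        proof -
          have hft: "h f \<in> topspace X" using hF2[OF f] Ysub by blast
          have ev: "\<forall>\<^sub>F n in sequentially. h f \<in> star_of (Fs n) (Cov n)"
            by (rule Fs(2)[OF hft])
          have fle: "f n \<le> g n" if st: "h f \<in> star_of (Fs n) (Cov n)" for n
          proof -
            from st have "h f \<in> \<Union>{C \<in> Cov n. C \<inter> Fs n \<noteq> {}}" by (simp add: star_of_def)
            then obtain C where C: "C \<in> Cov n" "C \<inter> Fs n \<noteq> {}" "h f \<in> C" by blast
            have hfY: "h f \<in> Y" "h f \<notin> D" using hF2[OF f] by auto
            have "C = V f n"
            proof -
              have "C \<noteq> topspace X - Y" using C(3) hfY by blast
              moreover have "C \<notin> U ` (Y - h ` F2)"
              proof
                assume "C \<in> U ` (Y - h ` F2)"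
                then obtain y where y: "y \<in> Y" "y \<notin> h ` F2" "C = U y" by blast
                then have "h f \<in> U y \<inter> Y" using C(3) hfY by blast
                then have "h f = y" using U[OF y(1)] by blast
                then show False using y(2) f by blast
              qed
              ultimately have "C \<in> (\<lambda>f. V f n) ` F2" using C(1) unfolding Cov_def by blast
              then obtain f' where f': "f' \<in> F2" "C = V f' n" by blast
              then have "h f \<in> U (h f') \<inter> Y" using C(3) hfY unfolding V_def by blast
              moreover have "U (h f') \<inter> Y = {h f'}" using U[of "h f'"] hF2[OF f'(1)] by blast
              ultimately have "h f = h f'" by blast
              moreover have "f \<in> F" "f' \<in> F" using hF2[OF f] hF2[OF f'(1)] by auto
              ultimately have "f = f'" using h(1) by (meson inj_onD)
              then show ?thesis using f' by simp
            qed
            then obtain x where x: "x \<in> V f n" "x \<in> Fs n" using C(2) by blast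
            then have "x \<in> d ` {..g n}" using gF[of n] by blast
            then obtain i where i: "i \<le> g n" "x = d i" by blast
            have "\<not> i \<le> f n"
            proof
              assume "i \<le> f n"
              then have "x \<in> W (h f) (d i)" using x(1) i(2) unfolding V_def by blast
              moreover have "d i \<in> D" using rd by blast
              moreover have "h f \<in> Y - D" using hfY by blast
              ultimately show False using W i(2) by blast
            qed
            then show ?thesis using i(1) by simp
          qed
          show ?thesis unfolding le_star_def by (rule eventually_mono[OF ev fle])
        qed
        then show ?thesis by blast
      qed
      then obtain g2 where g2: "\<forall>f\<in>F2. le_star f g2" by blast
      have "\<forall>f\<in>F. le_star f (\<lambda>n. g1 n + g2 n)"
      proof
        fix f assume "f \<in> F"
        then have "le_star f g1 \<or> le_star f g2" using g1 g2 by (auto simp: F1_def F2_def)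
        then show "le_star f (\<lambda>n. g1 n + g2 n)" unfolding le_star_def
          by (auto elim: eventually_mono)
      qed
      then show False using unb unfolding unbounded_family_def by blast
    qed
  qed
qed

end
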